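(* Let $A$ be $K\{X\}_\infty$ or $K\{X\}$, regarded as the unitary commutative algebra $(A,\sqcup\!\sqcup)$ with augmentation ideal $\bar A=\bigoplus_{n\ge1}A^{(n)}$, and let $\nabla_2:A\to A\otimes A$ be defined by $\langle\vee^2(f_1,f_2),g\rangle=\langle f_1\otimes f_2,\nabla_2(g)\rangle$ for all $f_1,f_2\in A$. Then: (i) $\nabla_2$ is a morphism of commutative algebras $(A,\sqcup\!\sqcup)\to(A\otimes A,\sqcup\!\sqcup\otimes\sqcup\!\sqcup)$; (ii) $\nabla_2$ is not coassociative, and for a nonempty monomial $T$ with root $\rho$, $\nabla_2(T)=T\otimes1+1\otimes T+T^1\otimes T^2$ if $T=\vee^2(T^1,T^2)$, and $\nabla_2(T)=T\otimes1+1\otimes T$ if $\rho$ has arity different from $2$; (iii) with $\nabla'_2(f):=\nabla_2(f)-f\otimes1-1\otimes f$, one has $\nabla'_2(f)\in\bar A\otimes\bar A$ for all $f\in\bar A$. In other words, $(A,\sqcup\!\sqcup)$ with $\nabla_2$ and the augmentation as counit is a co-unital-magma object in the category of commutative algebras.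
   Context: $K$ is a field of characteristic $0$, $X=\{x_1,x_2,\dots\}$ a finite or countable set of variables. A planar rooted tree is reduced if no vertex has exactly one incoming edge. $K\{X\}_\infty$ has basis the monomials: the empty tree $1$ and all planar reduced rooted trees with leaves labelled by elements of $X$, graded by number of leaves ($A^{(n)}$); for $k\ge2$, $\vee^k$ grafts $k$ nonempty trees (in order) onto a new root, extended multilinearly, with unit conventions (arguments $1$ omitted, so $\vee^2(1,a)=\vee^2(a,1)=a$, $\vee^k(1,\dots,1)=1$). $K\{X\}$ is the span of $1$ and the binary monomials. $A\otimes A$ carries the operations componentwise, and the co-addition $\Delta_a$ is the unique unital homomorphism with $\Delta_a(x_i)=x_i\otimes1+1\otimes x_i$. $\langle\,,\rangle$ is the bilinear form on $A$ making monomials orthonormal, extended factorwise to tensor products; $\sqcup\!\sqcup$ is defined by $\langle g_1\sqcup\!\sqcup g_2,h\rangle=\langle g_1\otimes g_2,\Delta_a(h)\rangle$ for all $h\in A$; $A\otimes A$ is a commutative algebra with the componentwise product $(a\otimes b)(a'\otimes b')=(a\sqcup\!\sqcup a')\otimes(b\sqcup\!\sqcup b')$. *)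

theory Defs
  imports Main "HOL-Library.Countable"
begin

datatype 'x tree = Leaf 'x | Node "'x tree list"

fun reduced :: "'x tree \<Rightarrow> bool" where
  "reduced (Leaf x) = True"
| "reduced (Node ts) = (2 \<le> length ts \<and> (\<forall>t\<in>set ts. reduced t))"

fun binary :: "'x tree \<Rightarrow> bool" where
  "binary (Leaf x) = True"
| "binary (Node ts) = (length ts = 2 \<and> (\<forall>t\<in>set ts. binary t))"

fun arity :: "'x tree \<Rightarrow> nat" where
  "arity (Leaf x) = 0"
| "arity (Node ts) = length ts"

text \<open>Monomials: the empty tree One, or a tree.\<close>
datatype 'x mono = One | Tr "'x tree"

text \<open>The flag bin selects A = K{X} (bin = True, binary monomials) or
  A = K{X}_infinity (bin = False).\<close>
fun validm :: "bool \<Rightarrow> 'x mono \<Rightarrow> bool" where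
  "validm bin One = True"
| "validm bin (Tr t) = (reduced t \<and> (bin \<longrightarrow> binary t))"

definition supp :: "('a \<Rightarrow> 'k::zero) \<Rightarrow> 'a set" where
  "supp f = {a. f a \<noteq> 0}"

definition basis :: "'a \<Rightarrow> 'a \<Rightarrow> 'k::{zero,one}" where
  "basis a = (\<lambda>y. if y = a then 1 else 0)"

text \<open>Elements of A, of A tensor A (basis: pairs of monomials) and of the augmentation ideal.\<close>
definition inA :: "bool \<Rightarrow> ('x mono \<Rightarrow> 'k::zero) \<Rightarrow> bool" where
  "inA bin f \<longleftrightarrow> finite (supp f) \<and> (\<forall>m. f m \<noteq> 0 \<longrightarrow> validm bin m)"

definition inAA :: "bool \<Rightarrow> ('x mono \<times> 'x mono \<Rightarrow> 'k::zero) \<Rightarrow> bool" where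
  "inAA bin u \<longleftrightarrow> finite (supp u) \<and>
     (\<forall>m n. u (m, n) \<noteq> 0 \<longrightarrow> validm bin m \<and> validm bin n)"

definition inAbar :: "bool \<Rightarrow> ('x mono \<Rightarrow> 'k::zero) \<Rightarrow> bool" where
  "inAbar bin f \<longleftrightarrow> inA bin f \<and> f One = 0"

definition inAbarAbar :: "bool \<Rightarrow> ('x mono \<times> 'x mono \<Rightarrow> 'k::zero) \<Rightarrow> bool" where
  "inAbarAbar bin u \<longleftrightarrow> inAA bin u \<and> (\<forall>m. u (One, m) = 0 \<and> u (m, One) = 0)"

definition tensor :: "('a \<Rightarrow> 'k::times) \<Rightarrow> ('b \<Rightarrow> 'k) \<Rightarrow> ('a \<times> 'b \<Rightarrow> 'k)" where
  "tensor f g = (\<lambda>(a, b). f a * g b)"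

definition pair :: "('a \<Rightarrow> 'k::comm_ring_1) \<Rightarrow> ('a \<Rightarrow> 'k) \<Rightarrow> 'k" where
  "pair f g = (\<Sum>a\<in>supp f. f a * g a)"

text \<open>Multilinear extension of a map defined on lists of basis elements.\<close>
fun mlin :: "('a list \<Rightarrow> 'b) \<Rightarrow> ('a \<Rightarrow> 'k::comm_ring_1) list \<Rightarrow> 'b \<Rightarrow> 'k" where
  "mlin F [] = basis (F [])"
| "mlin F (f # fs) = (\<lambda>y. \<Sum>a\<in>supp f. f a * mlin (\<lambda>as. F (a # as)) fs y)"

definition trees_of :: "'x mono list \<Rightarrow> 'x tree list" where
  "trees_of ms = concat (map (\<lambda>m. case m of One \<Rightarrow> [] | Tr t \<Rightarrow> [t]) ms)"

text \<open>vee^k on monomials with the unit conventions (arguments One are omitted).\<close>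
definition vee_mono :: "'x mono list \<Rightarrow> 'x mono" where
  "vee_mono ms = (case trees_of ms of [] \<Rightarrow> One | [t] \<Rightarrow> Tr t | ts \<Rightarrow> Tr (Node ts))"

definition vee2 :: "('x mono \<Rightarrow> 'k::comm_ring_1) \<Rightarrow> ('x mono \<Rightarrow> 'k) \<Rightarrow> ('x mono \<Rightarrow> 'k)" where
  "vee2 f g = mlin vee_mono [f, g]"

definition veeT :: "('x mono \<times> 'x mono \<Rightarrow> 'k::comm_ring_1) list \<Rightarrow> ('x mono \<times> 'x mono \<Rightarrow> 'k)" where
  "veeT us = mlin (\<lambda>ps. (vee_mono (map fst ps), vee_mono (map snd ps))) us"

text \<open>The unital homomorphism with Delta_a(x) = x \<otimes> 1 + 1 \<otimes> x, given on trees by its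
  homomorphism equations.\<close>
fun deltaT :: "'x tree \<Rightarrow> ('x mono \<times> 'x mono \<Rightarrow> 'k::comm_ring_1)" where
  "deltaT (Leaf x) = (\<lambda>p. basis (Tr (Leaf x), One) p + basis (One, Tr (Leaf x)) p)"
| "deltaT (Node ts) = veeT (map deltaT ts)"

fun deltaA :: "'x mono \<Rightarrow> ('x mono \<times> 'x mono \<Rightarrow> 'k::comm_ring_1)" where
  "deltaA One = basis (One, One)"
| "deltaA (Tr t) = deltaT t"

definition shuffle :: "bool \<Rightarrow> ('x mono \<Rightarrow> 'k::comm_ring_1) \<Rightarrow> ('x mono \<Rightarrow> 'k) \<Rightarrow> ('x mono \<Rightarrow> 'k)" where
  "shuffle bin g1 g2 = (\<lambda>h. if validm bin h then pair (tensor g1 g2) (deltaA h) else 0)"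

definition tprod :: "bool \<Rightarrow> ('x mono \<times> 'x mono \<Rightarrow> 'k::comm_ring_1) \<Rightarrow> ('x mono \<times> 'x mono \<Rightarrow> 'k)
    \<Rightarrow> ('x mono \<times> 'x mono \<Rightarrow> 'k)" where
  "tprod bin u v = (\<lambda>(p, q). \<Sum>(m, n)\<in>supp u. \<Sum>(m', n')\<in>supp v.
      u (m, n) * v (m', n') * shuffle bin (basis m) (basis m') p * shuffle bin (basis n) (basis n') q)"

definition nabla2 :: "bool \<Rightarrow> ('x mono \<Rightarrow> 'k::comm_ring_1) \<Rightarrow> ('x mono \<times> 'x mono \<Rightarrow> 'k)" where
  "nabla2 bin g = (\<lambda>(m1, m2). if validm bin m1 \<and> validm bin m2
      then pair (vee2 (basis m1) (basis m2)) g else 0)"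

definition nabla2' :: "bool \<Rightarrow> ('x mono \<Rightarrow> 'k::comm_ring_1) \<Rightarrow> ('x mono \<times> 'x mono \<Rightarrow> 'k)" where
  "nabla2' bin f = (\<lambda>p. nabla2 bin f p - tensor f (basis One) p - tensor (basis One) f p)"

text \<open>nabla_2 \<otimes> id and id \<otimes> nabla_2 : A \<otimes> A \<rightarrow> A \<otimes> A \<otimes> A (triples of monomials).\<close>
definition nabla_left :: "bool \<Rightarrow> ('x mono \<times> 'x mono \<Rightarrow> 'k::comm_ring_1)
    \<Rightarrow> ('x mono \<times> 'x mono \<times> 'x mono \<Rightarrow> 'k)" where
  "nabla_left bin u = (\<lambda>(m1, m2, m3). \<Sum>(m, n)\<in>supp u.
      u (m, n) * nabla2 bin (basis m) (m1, m2) * basis n m3)"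

definition nabla_right :: "bool \<Rightarrow> ('x mono \<times> 'x mono \<Rightarrow> 'k::comm_ring_1)
    \<Rightarrow> ('x mono \<times> 'x mono \<times> 'x mono \<Rightarrow> 'k)" where
  "nabla_right bin u = (\<lambda>(m1, m2, m3). \<Sum>(m, n)\<in>supp u.
      u (m, n) * basis m m1 * nabla2 bin (basis n) (m2, m3))"

end

theory Submission
  imports Defs
begin


lemma basis_apply: "basis a y = (if y = a then 1 else 0)" by (simp add: basis_def)

lemma supp_basis[simp]: "supp (basis a :: _ \<Rightarrow> 'k::zero_neq_one) = {a}"
  by (auto simp: supp_def basis_def)

lemma pair_basis[simp]: "pair (basis a) g = (g a :: 'k::comm_ring_1)"
  by (simp add: pair_def) (simp add: basis_def)

lemma tensor_basis[simp]: "tensor (basis a) (basis b) = (basis (a,b) :: _ \<Rightarrow> 'k::comm_ring_1)"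
  by (auto simp: tensor_def basis_def fun_eq_iff)

lemma vee2m: "vee_mono [m1,m2] = (case m1 of One \<Rightarrow> m2 | Tr a \<Rightarrow> (case m2 of One \<Rightarrow> Tr a | Tr b \<Rightarrow> Tr (Node [a,b])))"
  by (cases m1; cases m2) (simp_all add: vee_mono_def trees_of_def)

lemma vee_One_left[simp]: "vee_mono [One, m] = m" by (simp add: vee2m)
lemma vee_One_right[simp]: "vee_mono [m, One] = m" by (cases m) (simp_all add: vee2m)
lemma vee_Tr_Tr[simp]: "vee_mono [Tr a, Tr b] = Tr (Node [a,b])" by (simp add: vee2m)

lemma vee2_basis: "vee2 (basis m1) (basis m2) = (basis (vee_mono [m1,m2]) :: _ \<Rightarrow> 'k::comm_ring_1)"
  unfolding vee2_def by (simp add: fun_eq_iff) (simp add: basis_def)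

lemma nabla2_eq: "nabla2 bin g (m1,m2) = (if validm bin m1 \<and> validm bin m2 then g (vee_mono [m1,m2]) else (0::'k::comm_ring_1))"
  unfolding nabla2_def vee2_basis by simp

lemma sum_collapse: "finite (supp h) \<Longrightarrow> (\<Sum>y\<in>supp h. h y * (if y = z then 1 else 0)) = (h z :: 'k::comm_ring_1)"
  by (simp add: if_distrib[of "\<lambda>x. _ * x"] cong: if_cong) (auto simp: supp_def)

lemma sum_collapse': "finite (supp h) \<Longrightarrow> (\<Sum>y\<in>supp h. h y * (if z = y then 1 else 0)) = (h z :: 'k::comm_ring_1)"
  by (simp add: if_distrib[of "\<lambda>x. _ * x"] cong: if_cong) (auto simp: supp_def)

lemma trees_of_simps[simp]: "trees_of [] = []" "trees_of (One # ms) = trees_of ms"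
  "trees_of (Tr t # ms) = t # trees_of ms"
  by (simp_all add: trees_of_def)

lemma set_trees_of: "t \<in> set (trees_of ms) \<longleftrightarrow> Tr t \<in> set ms"
proof (induction ms)
  case (Cons m ms) then show ?case by (cases m) auto
qed simp

lemma length_trees_of: "length (trees_of ms) \<le> length ms"
proof (induction ms)
  case (Cons m ms) then show ?case by (cases m) auto
qed simp

lemma valid_vee: assumes "\<forall>m\<in>set ms. validm bin m" "bin \<longrightarrow> length ms = 2"
  shows "validm bin (vee_mono ms)"
proof -
  have tv: "\<forall>t\<in>set (trees_of ms). reduced t \<and> (bin \<longrightarrow> binary t)"
    using assms(1) by (auto simp: set_trees_of dest!: bspec)
  have len: "bin \<longrightarrow> length (trees_of ms) \<le> 2" using assms(2) length_trees_of[of ms] by auto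
  show ?thesis
  proof (cases "trees_of ms")
    case Nil then show ?thesis by (simp add: vee_mono_def)
  next
    case (Cons t rest)
    show ?thesis
    proof (cases rest)
      case Nil then show ?thesis using Cons tv by (simp add: vee_mono_def)
    next
      case (Cons t2 rest2)
      then show ?thesis using \<open>trees_of ms = t # rest\<close> tv len by (auto simp: vee_mono_def)
    qed
  qed
qed

lemma mlin_finite: "(\<forall>f\<in>set fs. finite (supp f)) \<Longrightarrow> finite (supp (mlin F fs :: _ \<Rightarrow> 'k::comm_ring_1))"
proof (induction fs arbitrary: F)
  case Nil then show ?case by simp
next
  case (Cons f fs)
  have "supp (mlin F (f # fs)) \<subseteq> (\<Union>a\<in>supp f. supp (mlin (\<lambda>as. F (a # as)) fs))"
  proof
    fix y assume "y \<in> supp (mlin F (f # fs))"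
    then have "(\<Sum>a\<in>supp f. f a * mlin (\<lambda>as. F (a # as)) fs y) \<noteq> 0" by (simp add: supp_def)
    then obtain a where "a \<in> supp f" "f a * mlin (\<lambda>as. F (a # as)) fs y \<noteq> 0"
      by (meson sum.neutral)
    then show "y \<in> (\<Union>a\<in>supp f. supp (mlin (\<lambda>as. F (a # as)) fs))" by (auto simp: supp_def)
  qed
  moreover have "finite (\<Union>a\<in>supp f. supp (mlin (\<lambda>as. F (a # as)) fs))"
    using Cons by auto
  ultimately show ?case by (rule finite_subset)
qed

lemma mlin_nz: "mlin F fs y \<noteq> (0::'k::comm_ring_1) \<Longrightarrow> \<exists>as. list_all2 (\<lambda>a f. f a \<noteq> 0) as fs \<and> y = F as"
proof (induction fs arbitrary: F)
  case Nil then show ?case by (auto simp: basis_def split: if_splits)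
next
  case (Cons f fs)
  then have "(\<Sum>a\<in>supp f. f a * mlin (\<lambda>as. F (a # as)) fs y) \<noteq> 0" by simp
  then obtain a where a: "a \<in> supp f" "f a * mlin (\<lambda>as. F (a # as)) fs y \<noteq> 0"
    by (meson sum.neutral)
  have "mlin (\<lambda>as. F (a # as)) fs y \<noteq> 0" using a(2) by auto
  then obtain as where "list_all2 (\<lambda>a f. f a \<noteq> 0) as fs" "y = F (a # as)"
    using Cons.IH[of "\<lambda>as. F (a # as)"] by auto
  then show ?case using a by (intro exI[of _ "a # as"]) (auto simp: supp_def)
qed

lemma deltaT_props: "validm bin (Tr t) \<Longrightarrow> finite (supp (deltaT t :: _ \<Rightarrow> 'k::comm_ring_1))
   \<and> (\<forall>m n. deltaT t (m,n) \<noteq> (0::'k) \<longrightarrow> validm bin m \<and> validm bin n)"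
proof (induction t)
  case (Leaf x)
  have "supp (deltaT (Leaf x) :: _ \<Rightarrow> 'k) \<subseteq> {(Tr (Leaf x), One), (One, Tr (Leaf x))}"
    by (auto simp: supp_def basis_def split: if_splits)
  then show ?case by (auto simp: basis_def finite_subset split: if_splits)
next
  case (Node ts)
  have tv: "\<forall>t\<in>set ts. validm bin (Tr t)" and l: "bin \<longrightarrow> length ts = 2"
    using Node.prems by auto
  have fin: "finite (supp (deltaT (Node ts) :: _ \<Rightarrow> 'k))"
    using Node.IH tv by (simp add: veeT_def) (intro mlin_finite, auto)
  have "validm bin m \<and> validm bin n" if nz: "deltaT (Node ts) (m,n) \<noteq> (0::'k)" for m n
  proof -
    from nz have "mlin (\<lambda>ps. (vee_mono (map fst ps), vee_mono (map snd ps))) (map deltaT ts) (m,n) \<noteq> (0::'k)"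
      by (simp add: veeT_def)
    from mlin_nz[OF this] obtain as where as: "list_all2 (\<lambda>a f. f a \<noteq> (0::'k)) as (map deltaT ts)"
      "(m,n) = (vee_mono (map fst as), vee_mono (map snd as))" by blast
    have la: "length as = length ts" using as(1) list_all2_lengthD by fastforce
    have "validm bin (fst x) \<and> validm bin (snd x)" if "x \<in> set as" for x
    proof -
      obtain i where i: "i < length as" "x = as ! i" using \<open>x \<in> set as\<close> by (auto simp: in_set_conv_nth)
      have "deltaT (ts ! i) (as ! i) \<noteq> (0::'k)" using as(1) i la by (auto simp: list_all2_conv_all_nth)
      moreover have "ts ! i \<in> set ts" using i la by simp
      ultimately show ?thesis using Node.IH tv i by (cases x) fastforce
    qed
    then show ?thesis using as(2) la l by (auto intro!: valid_vee)
  qed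
  then show ?case using fin by blast
qed

lemma deltaA_props: assumes vp: "validm bin p" shows "finite (supp (deltaA p :: _ \<Rightarrow> 'k::comm_ring_1))
   \<and> (\<forall>m n. deltaA p (m,n) \<noteq> (0::'k) \<longrightarrow> validm bin m \<and> validm bin n)"
proof (cases p)
  case One
  have "supp (deltaA p :: _ \<Rightarrow> 'k) = {(One,One)}" using One by simp
  then show ?thesis using One by (auto simp: basis_def split: if_splits)
next
  case (Tr t)
  then show ?thesis using vp deltaT_props[of bin t] by simp
qed

lemma sum_cong_supp: "finite A \<Longrightarrow> finite B \<Longrightarrow> (\<And>x. x\<in>A \<Longrightarrow> x\<notin>B \<Longrightarrow> h x = 0)
  \<Longrightarrow> (\<And>x. x\<in>B \<Longrightarrow> x\<notin>A \<Longrightarrow> h x = 0) \<Longrightarrow> sum h A = (sum h B :: 'k::comm_monoid_add)"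
proof -
  assume a: "finite A" "finite B" "\<And>x. x\<in>A \<Longrightarrow> x\<notin>B \<Longrightarrow> h x = 0" "\<And>x. x\<in>B \<Longrightarrow> x\<notin>A \<Longrightarrow> h x = 0"
  have "sum h A = sum h (A \<union> B)" using a by (intro sum.mono_neutral_left) auto
  also have "\<dots> = sum h B" using a by (intro sum.mono_neutral_right) auto
  finally show ?thesis .
qed

lemma swap3: "(\<Sum>z\<in>Z. c z * (\<Sum>x\<in>X. \<Sum>y\<in>Y. a x * (b y * e x y z))) =
   (\<Sum>x\<in>X. \<Sum>y\<in>Y. a x * (b y * (\<Sum>z\<in>Z. c z * e x y z)) :: 'k::comm_semiring_0)"
proof -
  have "(\<Sum>z\<in>Z. c z * (\<Sum>x\<in>X. \<Sum>y\<in>Y. a x * (b y * e x y z))) =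
     (\<Sum>z\<in>Z. \<Sum>x\<in>X. \<Sum>y\<in>Y. a x * (b y * (c z * e x y z)))"
    by (simp add: sum_distrib_left mult.left_commute)
  also have "\<dots> = (\<Sum>x\<in>X. \<Sum>z\<in>Z. \<Sum>y\<in>Y. a x * (b y * (c z * e x y z)))" by (rule sum.swap)
  also have "\<dots> = (\<Sum>x\<in>X. \<Sum>y\<in>Y. \<Sum>z\<in>Z. a x * (b y * (c z * e x y z)))"
    by (rule sum.cong[OF refl], rule sum.swap)
  also have "\<dots> = (\<Sum>x\<in>X. \<Sum>y\<in>Y. a x * (b y * (\<Sum>z\<in>Z. c z * e x y z)))"
    by (simp add: sum_distrib_left)
  finally show ?thesis .
qed



lemma delta_vee: assumes vp: "validm bin p" and vq: "validm bin q"
  shows "(deltaA (vee_mono [p,q]) z :: 'k::comm_ring_1) = (\<Sum>x\<in>supp (deltaA p :: _ \<Rightarrow> 'k). \<Sum>y\<in>supp (deltaA q :: _ \<Rightarrow> 'k).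
     deltaA p x * (deltaA q y * basis (vee_mono [fst x, fst y], vee_mono [snd x, snd y]) z))" (is "_ = ?R")
proof (cases p)
  case One
  have fq: "finite (supp (deltaA q :: _ \<Rightarrow> 'k))" using deltaA_props[OF vq] by blast
  have "?R = (\<Sum>y\<in>supp (deltaA q :: _ \<Rightarrow> 'k). deltaA q y * (if z = y then 1 else 0::'k))" using One by (simp add: basis_apply)
  also have "\<dots> = deltaA q z" by (rule sum_collapse'[OF fq])
  finally show ?thesis using One by simp
next
  case (Tr t1)
  show ?thesis
  proof (cases q)
    case One
    have fp: "finite (supp (deltaA p :: _ \<Rightarrow> 'k))" using deltaA_props[OF vp] by blast
    have "?R = (\<Sum>y\<in>supp (deltaA p :: _ \<Rightarrow> 'k). deltaA p y * (if z = y then 1 else 0::'k))" using One by (simp add: basis_apply)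
    also have "\<dots> = deltaA p z" by (rule sum_collapse'[OF fp])
    finally show ?thesis using One by simp
  next
    case (Tr t2)
    show ?thesis using \<open>p = Tr t1\<close> Tr by (simp add: veeT_def sum_distrib_left)
  qed
qed

definition sub2 :: "'x mono \<Rightarrow> 'x mono \<times> 'x mono" where
  "sub2 h = (case h of Tr (Node [a,b]) \<Rightarrow> (Tr a, Tr b) | _ \<Rightarrow> (One, One))"

lemma pre_vee: "(m1, m2) \<in> {(vee_mono [m1,m2], One), (One, vee_mono [m1,m2]), sub2 (vee_mono [m1,m2])}"
  by (cases m1; cases m2) (auto simp: sub2_def)

lemma nabla2_finite: assumes "inA bin f" shows "finite (supp (nabla2 bin f))"
proof -
  have "supp (nabla2 bin f) \<subseteq> (\<Union>h\<in>supp f. {(h, One), (One, h), sub2 h})"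
  proof
    fix x assume x: "x \<in> supp (nabla2 bin f)"
    obtain m1 m2 where xe: "x = (m1, m2)" by fastforce
    have "f (vee_mono [m1,m2]) \<noteq> 0" using x xe by (auto simp: supp_def nabla2_eq split: if_splits)
    then show "x \<in> (\<Union>h\<in>supp f. {(h, One), (One, h), sub2 h})"
      using pre_vee[of m1 m2] xe by (auto simp: supp_def)
  qed
  moreover have "finite (supp f)" using assms by (simp add: inA_def)
  ultimately show ?thesis by (meson finite_UN_I finite_insert finite.emptyI finite_subset)
qed

lemma inAA_nabla2: assumes "inA bin f" shows "inAA bin (nabla2 bin f)"
  using nabla2_finite[OF assms] by (auto simp: inAA_def nabla2_eq split: if_splits)

lemma morph:
  fixes f g :: "'x mono \<Rightarrow> 'k::comm_ring_1"
  assumes f: "inA bin f" and g: "inA bin g"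
  shows "nabla2 bin (shuffle bin f g) (p,q) = tprod bin (nabla2 bin f) (nabla2 bin g) (p,q)"
proof (cases "validm bin p \<and> validm bin q")
  case False
  then show ?thesis by (auto simp: nabla2_eq tprod_def shuffle_def split_def)
next
  case True
  define Dp where "Dp = (deltaA p :: _ \<Rightarrow> 'k)"
  define Dq where "Dq = (deltaA q :: _ \<Rightarrow> 'k)"
  define u where "u = nabla2 bin f"
  define v where "v = nabla2 bin g"
  define w where "w x y = (vee_mono [fst x, fst y], vee_mono [snd x, snd y])" for x y :: "'x mono \<times> 'x mono"
  have fp: "finite (supp Dp)" and vpp: "\<And>m n. Dp (m,n) \<noteq> 0 \<Longrightarrow> validm bin m \<and> validm bin n"
    using deltaA_props[of bin p] True unfolding Dp_def by blast+
  have fq: "finite (supp Dq)" and vqq: "\<And>m n. Dq (m,n) \<noteq> 0 \<Longrightarrow> validm bin m \<and> validm bin n"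
    using deltaA_props[of bin q] True unfolding Dq_def by blast+
  have ff: "finite (supp f)" using f by (simp add: inA_def)
  have fg: "finite (supp g)" using g by (simp add: inA_def)
  have ft: "finite (supp (tensor f g))"
    by (rule finite_subset[of _ "supp f \<times> supp g"]) (use ff fg in \<open>auto simp: supp_def tensor_def\<close>)
  have fu: "finite (supp u)" using nabla2_finite[OF f] by (simp add: u_def)
  have fv: "finite (supp v)" using nabla2_finite[OF g] by (simp add: v_def)
  have vv: "validm bin (vee_mono [p,q])" using True by (intro valid_vee) auto
  have L: "nabla2 bin (shuffle bin f g) (p,q) = (\<Sum>x\<in>supp Dp. \<Sum>y\<in>supp Dq. Dp x * (Dq y * tensor f g (w x y)))"
  proof -
    have "nabla2 bin (shuffle bin f g) (p,q) = pair (tensor f g) (deltaA (vee_mono [p,q]))"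
      using True vv by (simp add: nabla2_eq shuffle_def)
    also have "\<dots> = (\<Sum>z\<in>supp (tensor f g). tensor f g z *
        (\<Sum>x\<in>supp Dp. \<Sum>y\<in>supp Dq. Dp x * (Dq y * basis (w x y) z)))"
    proof -
      have dv: "deltaA (vee_mono [p,q]) z = (\<Sum>x\<in>supp Dp. \<Sum>y\<in>supp Dq. Dp x * (Dq y * basis (w x y) z))" for z
        unfolding Dp_def Dq_def w_def using True by (intro delta_vee) auto
      show ?thesis unfolding pair_def by (simp add: dv)
    qed
    also have "\<dots> = (\<Sum>x\<in>supp Dp. \<Sum>y\<in>supp Dq. Dp x * (Dq y *
        (\<Sum>z\<in>supp (tensor f g). tensor f g z * basis (w x y) z)))"
      by (rule swap3)
    also have "\<dots> = (\<Sum>x\<in>supp Dp. \<Sum>y\<in>supp Dq. Dp x * (Dq y * tensor f g (w x y)))"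
      by (simp add: basis_apply sum_collapse[OF ft])
    finally show ?thesis .
  qed
  have R: "tprod bin (nabla2 bin f) (nabla2 bin g) (p,q) =
     (\<Sum>a\<in>supp u. \<Sum>b\<in>supp v. u a * v b * Dp (fst a, fst b) * Dq (snd a, snd b))"
    using True by (simp add: tprod_def shuffle_def split_def u_def v_def Dp_def Dq_def)
  define H where "H c = Dp (fst c) * (Dq (snd c) * tensor f g (w (fst c) (snd c)))" for c
  define \<sigma> where "\<sigma> c = ((fst (fst c), fst (snd c)), (snd (fst c), snd (snd c)))"
    for c :: "('x mono \<times> 'x mono) \<times> ('x mono \<times> 'x mono)"
  have G: "u (fst c) * v (snd c) * Dp (fst (fst c), fst (snd c)) * Dq (snd (fst c), snd (snd c)) = H (\<sigma> c)" for c
  proof (cases "Dp (fst (fst c), fst (snd c)) \<noteq> 0 \<and> Dq (snd (fst c), snd (snd c)) \<noteq> 0")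
    case True
    then have "validm bin (fst (fst c))" "validm bin (fst (snd c))" "validm bin (snd (fst c))" "validm bin (snd (snd c))"
      using vpp vqq by blast+
    moreover obtain a1 a2 b1 b2 where c: "c = ((a1,a2),(b1,b2))" by (metis prod.collapse)
    ultimately show ?thesis
      by (simp add: H_def \<sigma>_def u_def v_def w_def nabla2_eq tensor_def mult_ac)
  next
    case False
    then show ?thesis by (auto simp: H_def \<sigma>_def)
  qed
  have inj: "inj \<sigma>" by (auto simp: inj_def \<sigma>_def prod_eq_iff)
  have ss: "\<sigma> (\<sigma> c) = c" for c by (simp add: \<sigma>_def)
  have "(\<Sum>a\<in>supp u. \<Sum>b\<in>supp v. u a * v b * Dp (fst a, fst b) * Dq (snd a, snd b))
      = (\<Sum>c\<in>supp u \<times> supp v. u (fst c) * v (snd c) * Dp (fst (fst c), fst (snd c)) * Dq (snd (fst c), snd (snd c)))"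
    by (simp add: sum.cartesian_product split_def)
  also have "\<dots> = (\<Sum>c\<in>supp u \<times> supp v. H (\<sigma> c))" using G by simp
  also have "\<dots> = sum H (\<sigma> ` (supp u \<times> supp v))"
    using sum.reindex[of \<sigma> "supp u \<times> supp v" H] inj_on_subset[OF inj subset_UNIV] by simp
  also have "\<dots> = sum H (supp Dp \<times> supp Dq)"
  proof (rule sum_cong_supp)
    show "finite (\<sigma> ` (supp u \<times> supp v))" using fu fv by simp
    show "finite (supp Dp \<times> supp Dq)" using fp fq by simp
    show "H c = 0" if "c \<in> \<sigma> ` (supp u \<times> supp v)" "c \<notin> supp Dp \<times> supp Dq" for c
      using that(2) by (auto simp: H_def supp_def mem_Times_iff)
    show "H c = 0" if "c \<in> supp Dp \<times> supp Dq" "c \<notin> \<sigma> ` (supp u \<times> supp v)" for c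
    proof -
      have "\<sigma> c \<notin> supp u \<times> supp v" using that(2) ss by (metis image_eqI)
      then have "u (fst (\<sigma> c)) * v (snd (\<sigma> c)) = 0" by (auto simp: supp_def mem_Times_iff)
      then show ?thesis using G[of "\<sigma> c"] ss by simp
    qed
  qed
  also have "\<dots> = (\<Sum>x\<in>supp Dp. \<Sum>y\<in>supp Dq. Dp x * (Dq y * tensor f g (w x y)))"
    by (simp add: sum.cartesian_product H_def split_def)
  finally show ?thesis using L R by simp
qed

lemma nabla2_eq': "nabla2 bin g p = (if validm bin (fst p) \<and> validm bin (snd p) then g (vee_mono [fst p, snd p]) else (0::'k::comm_ring_1))"
  by (cases p) (simp add: nabla2_eq)

lemma vee_eq_One: "vee_mono [a,b] = One \<longleftrightarrow> a = One \<and> b = One"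
  by (cases a; cases b) auto

lemma nabla_left_eq: assumes "finite (supp u)"
  shows "nabla_left bin u (m1,m2,m3) = (if validm bin m1 \<and> validm bin m2 then u (vee_mono [m1,m2], m3) else (0::'k::comm_ring_1))"
proof -
  have e: "u x * nabla2 bin (basis (fst x)) (m1, m2) * basis (snd x) m3 =
     (if validm bin m1 \<and> validm bin m2 then u x * (if x = (vee_mono [m1,m2], m3) then 1 else 0) else 0)" for x
    by (cases x) (auto simp: nabla2_eq basis_apply)
  show ?thesis unfolding nabla_left_def
    by (cases "validm bin m1 \<and> validm bin m2") (auto simp add: split_def e sum_collapse[OF assms])
qed

lemma nabla_right_eq: assumes "finite (supp u)"
  shows "nabla_right bin u (m1,m2,m3) = (if validm bin m2 \<and> validm bin m3 then u (m1, vee_mono [m2,m3]) else (0::'k::comm_ring_1))"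
proof -
  have e: "u x * basis (fst x) m1 * nabla2 bin (basis (snd x)) (m2, m3) =
     (if validm bin m2 \<and> validm bin m3 then u x * (if x = (m1, vee_mono [m2,m3]) then 1 else 0) else 0)" for x
    by (cases x) (auto simp: nabla2_eq basis_apply)
  show ?thesis unfolding nabla_right_def
    by (cases "validm bin m2 \<and> validm bin m3") (auto simp add: split_def e sum_collapse[OF assms])
qed

lemma noncoassoc: "\<exists>f :: 'x mono \<Rightarrow> 'k::comm_ring_1. inA bin f \<and>
      nabla_left bin (nabla2 bin f) \<noteq> nabla_right bin (nabla2 bin f)"
proof -
  define L where "L = Leaf (undefined::'x)"
  define f where "f = (basis (Tr (Node [Node [L,L], L])) :: 'x mono \<Rightarrow> 'k)"
  have inf: "inA bin f" by (auto simp: inA_def f_def basis_apply L_def)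
  have fin: "finite (supp (nabla2 bin f))" by (rule nabla2_finite[OF inf])
  have "nabla_left bin (nabla2 bin f) (Tr L, Tr L, Tr L) = 1"
    unfolding nabla_left_eq[OF fin] by (simp add: nabla2_eq f_def basis_apply L_def)
  moreover have "nabla_right bin (nabla2 bin f) (Tr L, Tr L, Tr L) = 0"
    unfolding nabla_right_eq[OF fin] by (simp add: nabla2_eq f_def basis_apply L_def)
  ultimately show ?thesis using inf by (intro exI[of _ f]) (auto dest: fun_cong[of _ _ "(Tr L, Tr L, Tr L)"])
qed

lemma formula2: assumes "validm bin (Tr t)" "t = Node [t1, t2]"
  shows "nabla2 bin (basis (Tr t) :: 'x mono \<Rightarrow> 'k::comm_ring_1) =
        (\<lambda>p. basis (Tr t, One) p + basis (One, Tr t) p + basis (Tr t1, Tr t2) p)"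
proof (rule ext)
  fix p :: "'x mono \<times> 'x mono"
  obtain a b where p: "p = (a,b)" by fastforce
  have v1: "validm bin (Tr t1)" "validm bin (Tr t2)" using assms by auto
  show "nabla2 bin (basis (Tr t)) p = basis (Tr t, One) p + basis (One, Tr t) p + basis (Tr t1, Tr t2) p"
    using assms v1 unfolding p by (cases a; cases b) (auto simp: nabla2_eq basis_apply)
qed

lemma formula_other: assumes "validm bin (Tr t)" "arity t \<noteq> 2"
  shows "nabla2 bin (basis (Tr t) :: 'x mono \<Rightarrow> 'k::comm_ring_1) =
        (\<lambda>p. basis (Tr t, One) p + basis (One, Tr t) p)"
proof (rule ext)
  fix p :: "'x mono \<times> 'x mono"
  obtain a b where p: "p = (a,b)" by fastforce
  show "nabla2 bin (basis (Tr t)) p = basis (Tr t, One) p + basis (One, Tr t) p"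
    using assms unfolding p by (cases a; cases b) (auto simp: nabla2_eq basis_apply)
qed

lemma part3: assumes "inAbar bin (f :: 'x mono \<Rightarrow> 'k::comm_ring_1)" shows "inAbarAbar bin (nabla2' bin f)"
proof -
  have f: "inA bin f" "f One = 0" using assms by (auto simp: inAbar_def)
  have ff: "finite (supp f)" using f by (simp add: inA_def)
  have fv: "f m \<noteq> 0 \<Longrightarrow> validm bin m" for m using f by (simp add: inA_def)
  have fin: "finite (supp (nabla2 bin f))" by (rule nabla2_finite[OF f(1)])
  have "supp (nabla2' bin f) \<subseteq> supp (nabla2 bin f) \<union> (supp f \<times> {One}) \<union> ({One} \<times> supp f)"
    by (auto simp: supp_def nabla2'_def tensor_def basis_apply split: if_splits)
  then have "finite (supp (nabla2' bin f))" using fin ff by (meson finite_SigmaI finite_UnI finite.emptyI finite_insert finite_subset)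
  moreover have "validm bin m \<and> validm bin n" if "nabla2' bin f (m,n) \<noteq> 0" for m n
    using that fv by (auto simp: nabla2'_def nabla2_eq tensor_def basis_apply split: if_splits)
  moreover have "nabla2' bin f (One, m) = 0 \<and> nabla2' bin f (m, One) = 0" for m
    using f fv by (cases "validm bin m") (auto simp: nabla2'_def nabla2_eq tensor_def basis_apply)
  ultimately show ?thesis by (auto simp: inAbarAbar_def inAA_def)
qed


theorem lemma4p7p3:
  fixes bin :: bool
  shows
  "\<comment> \<open>(i) nabla_2 is a unital algebra morphism (A, sh) \<rightarrow> (A \<otimes> A, sh \<otimes> sh)\<close>
   (\<forall>f :: 'x::countable mono \<Rightarrow> 'k::field_char_0. inA bin f \<longrightarrow> inAA bin (nabla2 bin f)) \<and>
   (\<forall>f g :: 'x mono \<Rightarrow> 'k. inA bin f \<longrightarrow> inA bin g \<longrightarrow>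
      nabla2 bin (\<lambda>m. f m + g m) = (\<lambda>p. nabla2 bin f p + nabla2 bin g p)) \<and>
   (\<forall>(c :: 'k) (f :: 'x mono \<Rightarrow> 'k). inA bin f \<longrightarrow>
      nabla2 bin (\<lambda>m. c * f m) = (\<lambda>p. c * nabla2 bin f p)) \<and>
   (nabla2 bin (basis One :: 'x mono \<Rightarrow> 'k) = basis (One, One)) \<and>
   (\<forall>f g :: 'x mono \<Rightarrow> 'k. inA bin f \<longrightarrow> inA bin g \<longrightarrow>
      nabla2 bin (shuffle bin f g) = tprod bin (nabla2 bin f) (nabla2 bin g)) \<and>
   \<comment> \<open>(ii) not coassociative, and the explicit formula on nonempty monomials\<close>
   (\<exists>f :: 'x mono \<Rightarrow> 'k. inA bin f \<and>
      nabla_left bin (nabla2 bin f) \<noteq> nabla_right bin (nabla2 bin f)) \<and>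
   (\<forall>(t :: 'x tree) t1 t2. validm bin (Tr t) \<longrightarrow> t = Node [t1, t2] \<longrightarrow>
      nabla2 bin (basis (Tr t) :: 'x mono \<Rightarrow> 'k) =
        (\<lambda>p. basis (Tr t, One) p + basis (One, Tr t) p + basis (Tr t1, Tr t2) p)) \<and>
   (\<forall>t :: 'x tree. validm bin (Tr t) \<longrightarrow> arity t \<noteq> 2 \<longrightarrow>
      nabla2 bin (basis (Tr t) :: 'x mono \<Rightarrow> 'k) =
        (\<lambda>p. basis (Tr t, One) p + basis (One, Tr t) p)) \<and>
   \<comment> \<open>(iii) reduced coproduct maps Abar into Abar \<otimes> Abar\<close>
   (\<forall>f :: 'x mono \<Rightarrow> 'k. inAbar bin f \<longrightarrow> inAbarAbar bin (nabla2' bin f))"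
  proof -
  have A: "\<forall>f :: 'x::countable mono \<Rightarrow> 'k::field_char_0. inA bin f \<longrightarrow> inAA bin (nabla2 bin f)"
    using inAA_nabla2 by blast
  have B: "\<forall>f g :: 'x mono \<Rightarrow> 'k. inA bin f \<longrightarrow> inA bin g \<longrightarrow>
      nabla2 bin (\<lambda>m. f m + g m) = (\<lambda>p. nabla2 bin f p + nabla2 bin g p)"
    by (auto simp: fun_eq_iff nabla2_eq')
  have C: "\<forall>(c :: 'k) (f :: 'x mono \<Rightarrow> 'k). inA bin f \<longrightarrow>
      nabla2 bin (\<lambda>m. c * f m) = (\<lambda>p. c * nabla2 bin f p)"
    by (auto simp: fun_eq_iff nabla2_eq')
  have D: "nabla2 bin (basis One :: 'x mono \<Rightarrow> 'k) = basis (One, One)"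
    by (auto simp: fun_eq_iff nabla2_eq' basis_apply vee_eq_One prod_eq_iff)
  have E: "\<forall>f g :: 'x mono \<Rightarrow> 'k. inA bin f \<longrightarrow> inA bin g \<longrightarrow>
      nabla2 bin (shuffle bin f g) = tprod bin (nabla2 bin f) (nabla2 bin g)"
  proof (intro allI impI ext)
    fix f g :: "'x mono \<Rightarrow> 'k" and x :: "'x mono \<times> 'x mono"
    assume "inA bin f" "inA bin g"
    then show "nabla2 bin (shuffle bin f g) x = tprod bin (nabla2 bin f) (nabla2 bin g) x"
      using morph[of bin f g "fst x" "snd x"] by simp
  qed
  have F: "\<exists>f :: 'x mono \<Rightarrow> 'k. inA bin f \<and>
      nabla_left bin (nabla2 bin f) \<noteq> nabla_right bin (nabla2 bin f)"
    by (rule noncoassoc)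
  have G: "\<forall>(t :: 'x tree) t1 t2. validm bin (Tr t) \<longrightarrow> t = Node [t1, t2] \<longrightarrow>
      nabla2 bin (basis (Tr t) :: 'x mono \<Rightarrow> 'k) =
        (\<lambda>p. basis (Tr t, One) p + basis (One, Tr t) p + basis (Tr t1, Tr t2) p)"
    using formula2 by blast
  have H: "\<forall>t :: 'x tree. validm bin (Tr t) \<longrightarrow> arity t \<noteq> 2 \<longrightarrow>
      nabla2 bin (basis (Tr t) :: 'x mono \<Rightarrow> 'k) =
        (\<lambda>p. basis (Tr t, One) p + basis (One, Tr t) p)"
    using formula_other by blast
  have I: "\<forall>f :: 'x mono \<Rightarrow> 'k. inAbar bin f \<longrightarrow> inAbarAbar bin (nabla2' bin f)"
    using part3 by blast
  show ?thesis using A B C D E F G H I by (intro conjI)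
qed

end
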